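(* Let $H$ be a complex Hilbert space and $\mathcal S(H)$ the set of bounded self-adjoint operators on $H$ with the logical order $\preceq$. For every pair $A,B \in \mathcal S(H)$, the set $\{P_C : C \in \mathcal S(H),\ C \preceq A \text{ and } C \preceq B\}$ has a maximum element (with respect to the usual order of projections), the meet $A \curlywedge B$ of $A$ and $B$ in $(\mathcal S(H),\preceq)$ exists, and \[ A \curlywedge B = B\big(\max\{P_C : C \preceq A \text{ and } C \preceq B\}\big). \]
   Context: For $C \in \mathcal S(H)$, $P_C$ denotes the orthogonal projection onto the closure of the range of $C$; projections are ordered by $P_1 \le P_2$ iff $P_1P_2 = P_1$. The logical order: $A \preceq B$ iff $B = A + D$ for some $D \in \mathcal S(H)$ with $AD = O$; equivalently $A = BP_A$. Juxtaposition denotes operator composition. *)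

theory Defs
  imports "HOL-Analysis.Analysis"
begin

class scaleC =
  fixes scaleC :: "complex \<Rightarrow> 'a \<Rightarrow> 'a" (infixr \<open>*\<^sub>C\<close> 75)

class complex_vector = real_vector + scaleC +
  assumes scaleC_add_right: "a *\<^sub>C (x + y) = a *\<^sub>C x + a *\<^sub>C y"
    and scaleC_add_left: "(a + b) *\<^sub>C x = a *\<^sub>C x + b *\<^sub>C x"
    and scaleC_scaleC: "a *\<^sub>C (b *\<^sub>C x) = (a * b) *\<^sub>C x"
    and scaleC_one: "1 *\<^sub>C x = x"
    and scaleR_scaleC: "scaleR r x = (complex_of_real r) *\<^sub>C x"

class complex_normed_vector = complex_vector + real_normed_vector +
  assumes norm_scaleC: "norm (a *\<^sub>C x) = cmod a * norm x"

class complex_inner = complex_normed_vector +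
  fixes cinner :: "'a \<Rightarrow> 'a \<Rightarrow> complex"
  assumes cinner_commute: "cinner x y = cnj (cinner y x)"
    and cinner_add_left: "cinner (x + y) z = cinner x z + cinner y z"
    and cinner_scaleC_left: "cinner (a *\<^sub>C x) y = cnj a * cinner x y"
    and cinner_self_real: "Im (cinner x x) = 0"
    and cinner_self_nonneg: "0 \<le> Re (cinner x x)"
    and cinner_self_eq_zero: "cinner x x = 0 \<longleftrightarrow> x = 0"
    and norm_eq_sqrt_cinner: "norm x = sqrt (Re (cinner x x))"

class chilbert_space = complex_inner + complete_space

definition bounded_clinear :: "('a::complex_normed_vector \<Rightarrow> 'b::complex_normed_vector) \<Rightarrow> bool" where
  "bounded_clinear f \<longleftrightarrow>
     (\<forall>x y. f (x + y) = f x + f y) \<and> (\<forall>c x. f (c *\<^sub>C x) = c *\<^sub>C f x) \<and>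
     (\<exists>K. \<forall>x. norm (f x) \<le> norm x * K)"

definition selfadj_ops :: "('a::chilbert_space \<Rightarrow> 'a) set" where
  "selfadj_ops = {A. bounded_clinear A \<and> (\<forall>x y. cinner (A x) y = cinner x (A y))}"

definition zero_op :: "'a::chilbert_space \<Rightarrow> 'a" where
  "zero_op = (\<lambda>_. 0)"

definition is_orth_proj :: "('a::chilbert_space \<Rightarrow> 'a) \<Rightarrow> bool" where
  "is_orth_proj P \<longleftrightarrow> P \<in> selfadj_ops \<and> P \<circ> P = P"

definition range_proj :: "('a::chilbert_space \<Rightarrow> 'a) \<Rightarrow> ('a \<Rightarrow> 'a)" where
  "range_proj C = (THE P. is_orth_proj P \<and> range P = closure (range C))"

definition proj_le :: "('a::chilbert_space \<Rightarrow> 'a) \<Rightarrow> ('a \<Rightarrow> 'a) \<Rightarrow> bool" where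
  "proj_le P1 P2 \<longleftrightarrow> P1 \<circ> P2 = P1"

definition logic_le :: "('a::chilbert_space \<Rightarrow> 'a) \<Rightarrow> ('a \<Rightarrow> 'a) \<Rightarrow> bool" where
  "logic_le A B \<longleftrightarrow> (\<exists>D \<in> selfadj_ops. B = (\<lambda>x. A x + D x) \<and> A \<circ> D = zero_op)"

definition is_logic_meet :: "('a::chilbert_space \<Rightarrow> 'a) \<Rightarrow> ('a \<Rightarrow> 'a) \<Rightarrow> ('a \<Rightarrow> 'a) \<Rightarrow> bool" where
  "is_logic_meet A B M \<longleftrightarrow> M \<in> selfadj_ops \<and> logic_le M A \<and> logic_le M B \<and>
     (\<forall>E \<in> selfadj_ops. logic_le E A \<and> logic_le E B \<longrightarrow> logic_le E M)"

end

theory Submission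
  imports Defs
begin

lemma scaleC_zero_left[simp]: "0 *\<^sub>C (x::'a::complex_vector) = 0"
  using scaleR_scaleC[of 0 x, symmetric] by simp

lemma scaleC_zero_right[simp]: "a *\<^sub>C (0::'a::complex_vector) = 0"
  using scaleC_add_right[of a "0::'a" 0, symmetric] by simp

lemma scaleC_minus_right: "a *\<^sub>C (- x) = - (a *\<^sub>C (x::'a::complex_vector))"
  unfolding eq_neg_iff_add_eq_0 using scaleC_add_right[of a "-x" x, symmetric] by simp

lemma scaleC_diff_right: "a *\<^sub>C (x - y) = a *\<^sub>C x - a *\<^sub>C (y::'a::complex_vector)"
  unfolding diff_conv_add_uminus scaleC_add_right scaleC_minus_right ..

lemma scaleR_as_scaleC: "r *\<^sub>R (x::'a::complex_vector) = complex_of_real r *\<^sub>C x"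
  by (rule scaleR_scaleC)

lemma cinner_zero_left[simp]: "cinner 0 (y::'a::complex_inner) = 0"
  using cinner_add_left[of "0::'a" 0 y] by simp

lemma cinner_minus_left: "cinner (- x) (y::'a::complex_inner) = - cinner x y"
  unfolding eq_neg_iff_add_eq_0 using cinner_add_left[of "-x" x y, symmetric] by simp

lemma cinner_diff_left: "cinner (x - y) (z::'a::complex_inner) = cinner x z - cinner y z"
  unfolding diff_conv_add_uminus cinner_add_left cinner_minus_left ..

lemma cinner_add_right: "cinner z (x + y) = cinner z x + cinner (z::'a::complex_inner) y"
  by (subst (1 2 3) cinner_commute) (simp add: cinner_add_left)

lemma cinner_scaleC_right: "cinner x (a *\<^sub>C y) = a * cinner (x::'a::complex_inner) y"
  by (subst (1 2) cinner_commute) (simp add: cinner_scaleC_left)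

lemma cinner_zero_right[simp]: "cinner (x::'a::complex_inner) 0 = 0"
  by (subst cinner_commute) simp

lemma cinner_diff_right: "cinner z (x - y) = cinner z x - cinner (z::'a::complex_inner) y"
  by (subst (1 2 3) cinner_commute) (simp add: cinner_diff_left)

lemma cinner_ext:
  assumes "\<And>y. cinner x y = cinner z (y::'a::complex_inner)" shows "x = z"
proof -
  have "cinner (x - z) (x - z) = cinner x (x - z) - cinner z (x - z)" by (rule cinner_diff_left)
  also have "\<dots> = 0" using assms[of "x - z"] by simp
  finally have "x - z = 0" using cinner_self_eq_zero by blast
  then show ?thesis by simp
qed

lemma norm_sq_cinner: "(norm x)^2 = Re (cinner x (x::'a::complex_inner))"
  using norm_eq_sqrt_cinner[of x] cinner_self_nonneg[of x] by simp

lemma cinner_expand_add: "cinner (x + y) (x + y) = cinner x x + cinner x y + cinner y x + cinner y (y::'a::complex_inner)"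
  by (simp only: cinner_add_left cinner_add_right ac_simps)

lemma cinner_expand_diff: "cinner (x - y) (x - y) = cinner x x - cinner x y - cinner y x + cinner y (y::'a::complex_inner)"
  by (simp only: cinner_diff_left cinner_diff_right) (simp add: diff_add_eq diff_diff_eq2)

lemma Re_cinner_sym: "Re (cinner y x) = Re (cinner x (y::'a::complex_inner))"
  by (subst cinner_commute) simp

lemma norm_add_sq: "(norm (x + y))^2 = (norm x)^2 + (norm y)^2 + 2 * Re (cinner x (y::'a::complex_inner))"
  unfolding norm_sq_cinner cinner_expand_add plus_complex.sel Re_cinner_sym[of y x] by simp

lemma cinner_minus_right: "cinner x (- y) = - cinner x (y::'a::complex_inner)"
  using cinner_diff_right[of x 0 y] by simp

lemma norm_diff_sq: "(norm (x - y))^2 = (norm x)^2 + (norm y)^2 - 2 * Re (cinner x (y::'a::complex_inner))"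
  using norm_add_sq[of x "-y"] by (simp add: cinner_minus_right)

lemma parallelogram: "(norm (x - y))^2 = 2*(norm x)^2 + 2*(norm y)^2 - (norm (x + (y::'a::complex_inner)))^2"
  using norm_add_sq[of x y] norm_diff_sq[of x y] by simp

lemma scaleC_minus1: "(-1) *\<^sub>C x = - (x::'a::complex_vector)"
  using scaleR_scaleC[of "-1" x, symmetric] by simp

lemma scaleC_scaleR_commute: "c *\<^sub>C (r *\<^sub>R x) = r *\<^sub>R (c *\<^sub>C (x::'a::complex_vector))"
  unfolding scaleR_scaleC scaleC_scaleC by (simp add: mult.commute)

lemma bounded_linear_scaleC: "bounded_linear (\<lambda>x::'a::complex_normed_vector. c *\<^sub>C x)"
  by (rule bounded_linear_intro[where K="cmod c"])
     (simp_all add: scaleC_add_right scaleC_scaleR_commute norm_scaleC mult.commute)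

lemma bounded_clinear_add: "bounded_clinear f \<Longrightarrow> f (x + y) = f x + f y"
  unfolding bounded_clinear_def by blast

lemma bounded_clinear_scaleC: "bounded_clinear f \<Longrightarrow> f (c *\<^sub>C x) = c *\<^sub>C f x"
  unfolding bounded_clinear_def by blast

lemma bounded_clinear_bounded_linear:
  assumes "bounded_clinear f" shows "bounded_linear f"
proof -
  obtain K where K: "\<And>x. norm (f x) \<le> norm x * K" using assms unfolding bounded_clinear_def by blast
  show ?thesis
    by (rule bounded_linear_intro[where K=K])
       (simp_all add: bounded_clinear_add[OF assms] scaleR_scaleC bounded_clinear_scaleC[OF assms] K)
qed

lemma bounded_clinear_diff: "bounded_clinear f \<Longrightarrow> f (x - y) = f x - f y"
  using bounded_clinear_bounded_linear linear_diff bounded_linear.linear by blast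

lemma bounded_clinear_zero: "bounded_clinear f \<Longrightarrow> f 0 = 0"
  using bounded_clinear_bounded_linear linear_0 bounded_linear.linear by blast

lemma bounded_clinear_cont: "bounded_clinear f \<Longrightarrow> continuous_on S f"
  using bounded_clinear_bounded_linear linear_continuous_on by blast

lemma bounded_clinear_comp:
  assumes f: "bounded_clinear f" and g: "bounded_clinear g"
  shows "bounded_clinear (f \<circ> g)"
proof -
  obtain K1 where K1: "\<And>x. norm (f x) \<le> norm x * K1" using f unfolding bounded_clinear_def by blast
  obtain K2 where K2: "\<And>x. norm (g x) \<le> norm x * K2" using g unfolding bounded_clinear_def by blast
  have "norm (f (g x)) \<le> norm x * (K2 * max K1 0)" for x
  proof -
    have "norm (f (g x)) \<le> norm (g x) * max K1 0"
      using K1[of "g x"] by (smt (verit) mult_left_mono norm_ge_zero)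
    also have "\<dots> \<le> norm x * K2 * max K1 0" using K2[of x] by (simp add: mult_right_mono)
    finally show ?thesis by (simp add: mult.assoc)
  qed
  then show ?thesis unfolding bounded_clinear_def
    using bounded_clinear_add[OF f] bounded_clinear_add[OF g]
      bounded_clinear_scaleC[OF f] bounded_clinear_scaleC[OF g] by auto
qed

lemma bounded_clinear_minus:
  assumes f: "bounded_clinear f" and g: "bounded_clinear g"
  shows "bounded_clinear (\<lambda>x. f x - g x)"
proof -
  obtain K1 where K1: "\<And>x. norm (f x) \<le> norm x * K1" using f unfolding bounded_clinear_def by blast
  obtain K2 where K2: "\<And>x. norm (g x) \<le> norm x * K2" using g unfolding bounded_clinear_def by blast
  have "norm (f x - g x) \<le> norm x * (K1 + K2)" for x
    using norm_triangle_ineq4[of "f x" "g x"] K1[of x] K2[of x] by (simp add: distrib_left)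
  then show ?thesis unfolding bounded_clinear_def
    using bounded_clinear_add[OF f] bounded_clinear_add[OF g]
      bounded_clinear_scaleC[OF f] bounded_clinear_scaleC[OF g]
    by (auto simp: scaleC_diff_right)
qed

definition csubspace :: "'a::complex_vector set \<Rightarrow> bool" where
  "csubspace S \<longleftrightarrow> 0 \<in> S \<and> (\<forall>x\<in>S. \<forall>y\<in>S. x + y \<in> S) \<and> (\<forall>c. \<forall>x\<in>S. c *\<^sub>C x \<in> S)"

lemma csubspace_0: "csubspace S \<Longrightarrow> 0 \<in> S"
  unfolding csubspace_def by blast
lemma csubspace_add: "csubspace S \<Longrightarrow> x \<in> S \<Longrightarrow> y \<in> S \<Longrightarrow> x + y \<in> S"
  unfolding csubspace_def by blast
lemma csubspace_scaleC: "csubspace S \<Longrightarrow> x \<in> S \<Longrightarrow> c *\<^sub>C x \<in> S"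
  unfolding csubspace_def by blast
lemma csubspace_scaleR: "csubspace S \<Longrightarrow> x \<in> S \<Longrightarrow> r *\<^sub>R x \<in> S"
  unfolding scaleR_scaleC by (rule csubspace_scaleC)
lemma csubspace_diff: "csubspace S \<Longrightarrow> x \<in> S \<Longrightarrow> y \<in> S \<Longrightarrow> x - y \<in> S"
  using csubspace_add[of S x "(-1) *\<^sub>C y"] csubspace_scaleC[of S y "-1"]
  by (simp add: scaleC_minus1)

lemma csubspace_closure:
  fixes S :: "'a::complex_normed_vector set"
  assumes S: "csubspace S" shows "csubspace (closure S)"
proof -
  have sc: "c *\<^sub>C x \<in> closure S" if "x \<in> closure S" for c x
  proof -
    have "(\<lambda>x. c *\<^sub>C x) ` closure S \<subseteq> closure S"
      by (rule image_closure_subset)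
         (auto intro: linear_continuous_on bounded_linear_scaleC closure_subset[THEN subsetD] csubspace_scaleC[OF S])
    then show ?thesis using that by blast
  qed
  have ad1: "x + y \<in> closure S" if "x \<in> closure S" "y \<in> S" for x y
  proof -
    have "(\<lambda>x. x + y) ` closure S \<subseteq> closure S"
      by (rule image_closure_subset)
         (auto intro!: continuous_intros closure_subset[THEN subsetD] csubspace_add[OF S] that(2))
    then show ?thesis using that by blast
  qed
  have ad: "x + y \<in> closure S" if "x \<in> closure S" "y \<in> closure S" for x y
  proof -
    have "(\<lambda>y. x + y) ` closure S \<subseteq> closure S"
      by (rule image_closure_subset)
         (auto intro!: continuous_intros ad1 that(1))
    then show ?thesis using that by blast
  qed
  show ?thesis unfolding csubspace_def
    using sc ad csubspace_0[OF S] closure_subset by blast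
qed

lemma csubspace_range:
  assumes "bounded_clinear C" shows "csubspace (range C)"
  unfolding csubspace_def
proof (intro conjI ballI allI)
  have "C 0 = 0" using bounded_clinear_zero[OF assms] .
  then show "0 \<in> range C" by (metis rangeI)
  fix x y assume "x \<in> range C" "y \<in> range C"
  then obtain a b where "x = C a" "y = C b" by blast
  then have "x + y = C (a + b)" using bounded_clinear_add[OF assms] by simp
  then show "x + y \<in> range C" by simp
next
  fix c x assume "x \<in> range C"
  then obtain a where "x = C a" by blast
  then have "c *\<^sub>C x = C (c *\<^sub>C a)" using bounded_clinear_scaleC[OF assms] by simp
  then show "c *\<^sub>C x \<in> range C" by simp
qed

lemma orth_of_min:
  fixes S :: "'a::complex_inner set"
  assumes S: "csubspace S" and v: "v \<in> S"
    and min: "\<And>s. s \<in> S \<Longrightarrow> (norm (x - v))^2 \<le> (norm (x - s))^2" and s: "s \<in> S"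
  shows "cinner (x - v) s = 0"
proof (cases "s = 0")
  case True then show ?thesis by simp
next
  case False
  define w where "w = x - v"
  define z where "z = cinner s w"
  define n2 where "n2 = (norm s)^2"
  have n2pos: "n2 > 0" using False unfolding n2_def by simp
  define t where "t = z / complex_of_real n2"
  have "v + t *\<^sub>C s \<in> S" using S v s csubspace_add csubspace_scaleC by blast
  then have le: "(norm w)^2 \<le> (norm (w - t *\<^sub>C s))^2"
    using min[of "v + t *\<^sub>C s"] unfolding w_def by (simp add: algebra_simps)
  have e1: "(norm (w - t *\<^sub>C s))^2 = (norm w)^2 + (norm (t *\<^sub>C s))^2 - 2 * Re (cinner w (t *\<^sub>C s))"
    by (rule norm_diff_sq)
  have cmt: "cmod t = cmod z / n2" unfolding t_def using n2pos by (simp add: norm_divide)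
  have e2: "(norm (t *\<^sub>C s))^2 = (cmod z)^2 / n2"
    unfolding norm_scaleC cmt using n2pos by (simp add: power_mult_distrib power2_eq_square n2_def)
  have ws: "cinner w s = cnj z" unfolding z_def by (rule cinner_commute)
  have "cinner w (t *\<^sub>C s) = t * cnj z" unfolding cinner_scaleC_right ws ..
  also have "\<dots> = (z * cnj z) / complex_of_real n2" unfolding t_def by simp
  also have "\<dots> = complex_of_real ((cmod z)^2 / n2)"
    by (simp add: complex_norm_square[symmetric] mult.commute[of z])
  finally have e3: "Re (cinner w (t *\<^sub>C s)) = (cmod z)^2 / n2" by simp
  from le e1 e2 e3 have "(cmod z)^2 / n2 \<le> 0" by simp
  with n2pos have "cmod z = 0"
    by (smt (verit) divide_pos_pos zero_less_power2 norm_ge_zero)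
  then have "z = 0" by simp
  then show ?thesis using ws unfolding w_def by simp
qed

lemma proj_exists:
  fixes S :: "'a::chilbert_space set"
  assumes S: "csubspace S" and cl: "closed S"
  shows "\<exists>v\<in>S. \<forall>s\<in>S. cinner (x - v) s = 0"
proof -
  define D where "D = (\<lambda>s. (norm (x - s))^2) ` S"
  define d where "d = Inf D"
  have Dne: "D \<noteq> {}" using csubspace_0[OF S] unfolding D_def by blast
  have bdd: "bdd_below D" unfolding D_def by (rule bdd_belowI[of _ 0]) auto
  have dle: "d \<le> (norm (x - s))^2" if "s \<in> S" for s
    unfolding d_def using cInf_lower[OF _ bdd] that unfolding D_def by blast
  define eps where "eps = (\<lambda>n::nat. inverse (real (Suc n)))"
  have epspos: "eps n > 0" for n unfolding eps_def by simp
  have "\<exists>s\<in>S. (norm (x - s))^2 < d + eps n" for n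
  proof -
    have "Inf D < d + eps n" using epspos[of n] unfolding d_def by simp
    from cInf_lessD[OF Dne this] show ?thesis unfolding D_def by blast
  qed
  then obtain sq where sq: "\<And>n. sq n \<in> S" "\<And>n. (norm (x - sq n))^2 < d + eps n" by metis
  have mono_eps: "eps m \<le> eps N" if "N \<le> m" for m N
    unfolding eps_def using that by (simp add: le_imp_inverse_le)
  have key: "(norm (sq m - sq n))^2 \<le> 2 * eps m + 2 * eps n" for m n
  proof -
    define a where "a = x - sq n"
    define b where "b = x - sq m"
    define mid where "mid = (1/2) *\<^sub>R (sq m + sq n)"
    have midS: "mid \<in> S" unfolding mid_def using S sq(1) csubspace_add csubspace_scaleR by blast
    have ab: "a + b = 2 *\<^sub>R (x - mid)" unfolding a_def b_def mid_def by (simp add: algebra_simps scaleR_2)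
    have "(norm (a + b))^2 = 4 * (norm (x - mid))^2" unfolding ab by (simp add: power_mult_distrib)
    then have "(norm (a + b))^2 \<ge> 4 * d" using dle[OF midS] by simp
    moreover have "sq m - sq n = a - b" unfolding a_def b_def by simp
    ultimately show ?thesis
      using parallelogram[of a b] sq(2)[of m] sq(2)[of n] unfolding a_def b_def by simp
  qed
  have cauchy: "Cauchy sq"
  proof (rule CauchyI)
    fix e :: real assume e: "e > 0"
    obtain N :: nat where N: "4 / e^2 < real N" using reals_Archimedean2 by blast
    have "4 * eps N < e^2"
    proof -
      have "4 / e^2 < real (Suc N)" using N by simp
      then have "4 < e^2 * real (Suc N)" using e by (simp add: field_simps)
      then show ?thesis unfolding eps_def using e by (simp add: field_simps)
    qed
    have "norm (sq m - sq n) < e" if "m \<ge> N" "n \<ge> N" for m n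
    proof -
      have "(norm (sq m - sq n))^2 < e^2"
        using key[of m n] mono_eps[OF that(1)] mono_eps[OF that(2)] \<open>4 * eps N < e^2\<close> by simp
      then show ?thesis using e by (smt (verit) power2_le_imp_le)
    qed
    then show "\<exists>M. \<forall>m\<ge>M. \<forall>n\<ge>M. norm (sq m - sq n) < e" by blast
  qed
  then obtain v where lim: "sq \<longlonglongrightarrow> v" using Cauchy_convergent_iff convergent_def by blast
  have vS: "v \<in> S" using closed_sequentially[OF cl sq(1) lim] .
  have limn: "(\<lambda>n. (norm (x - sq n))^2) \<longlonglongrightarrow> (norm (x - v))^2"
    by (intro tendsto_intros lim)
  have eps0: "eps \<longlonglongrightarrow> 0" unfolding eps_def by (rule LIMSEQ_inverse_real_of_nat)
  have min: "(norm (x - v))^2 \<le> (norm (x - s))^2" if "s \<in> S" for s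
  proof -
    have "(\<lambda>n. (norm (x - s))^2 + eps n) \<longlonglongrightarrow> (norm (x - s))^2 + 0"
      by (intro tendsto_intros eps0)
    moreover have "(norm (x - sq n))^2 \<le> (norm (x - s))^2 + eps n" for n
      using sq(2)[of n] dle[OF that] by simp
    ultimately show ?thesis using LIMSEQ_le[OF limn] by fastforce
  qed
  show ?thesis using orth_of_min[OF S vS min] vS by blast
qed

lemma orth_unique:
  fixes S :: "'a::complex_inner set"
  assumes S: "csubspace S" and v1: "v1 \<in> S" and v2: "v2 \<in> S"
    and o1: "\<forall>s\<in>S. cinner (x - v1) s = 0" and o2: "\<forall>s\<in>S. cinner (x - v2) s = 0"
  shows "v1 = v2"
proof -
  have d: "v1 - v2 \<in> S" using csubspace_diff[OF S v1 v2] .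
  have "cinner (v1 - v2) (v1 - v2) = cinner ((x - v2) - (x - v1)) (v1 - v2)" by simp
  also have "\<dots> = cinner (x - v2) (v1 - v2) - cinner (x - v1) (v1 - v2)" by (rule cinner_diff_left)
  also have "\<dots> = 0" using o1 o2 d by simp
  finally show ?thesis using cinner_self_eq_zero by (metis eq_iff_diff_eq_0)
qed

definition projS :: "'a::chilbert_space set \<Rightarrow> 'a \<Rightarrow> 'a" where
  "projS S x = (SOME v. v \<in> S \<and> (\<forall>s\<in>S. cinner (x - v) s = 0))"

lemma projS:
  assumes "csubspace S" "closed S"
  shows "projS S x \<in> S" "\<forall>s\<in>S. cinner (x - projS S x) s = 0"
proof -
  have "\<exists>v. v \<in> S \<and> (\<forall>s\<in>S. cinner (x - v) s = 0)" using proj_exists[OF assms, of x] by blast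
  from someI_ex[OF this] show "projS S x \<in> S" "\<forall>s\<in>S. cinner (x - projS S x) s = 0"
    unfolding projS_def by auto
qed

lemma projS_eq:
  assumes S: "csubspace S" "closed S" and v: "v \<in> S" "\<forall>s\<in>S. cinner (x - v) s = 0"
  shows "projS S x = v"
  using orth_unique[OF S(1) projS(1)[OF S] v(1) projS(2)[OF S] v(2)] .

lemma orth_proj_exists:
  fixes S :: "'a::chilbert_space set"
  assumes S: "csubspace S" "closed S"
  shows "is_orth_proj (projS S) \<and> range (projS S) = S"
proof -
  let ?P = "projS S"
  have add: "?P (x + y) = ?P x + ?P y" for x y
  proof (rule projS_eq[OF S])
    show "?P x + ?P y \<in> S" using projS(1)[OF S] csubspace_add[OF S(1)] by blast
    show "\<forall>s\<in>S. cinner (x + y - (?P x + ?P y)) s = 0"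
    proof
      fix s assume s: "s \<in> S"
      have "x + y - (?P x + ?P y) = (x - ?P x) + (y - ?P y)" by (simp add: algebra_simps)
      then have "cinner (x + y - (?P x + ?P y)) s = cinner (x - ?P x) s + cinner (y - ?P y) s"
        by (simp only: cinner_add_left)
      then show "cinner (x + y - (?P x + ?P y)) s = 0"
        using projS(2)[OF S, of x] projS(2)[OF S, of y] s by simp
    qed
  qed
  have sc: "?P (c *\<^sub>C x) = c *\<^sub>C ?P x" for c x
  proof (rule projS_eq[OF S])
    show "c *\<^sub>C ?P x \<in> S" using projS(1)[OF S] csubspace_scaleC[OF S(1)] by blast
    show "\<forall>s\<in>S. cinner (c *\<^sub>C x - c *\<^sub>C ?P x) s = 0"
      using projS(2)[OF S, of x] by (simp add: scaleC_diff_right[symmetric] cinner_scaleC_left)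
  qed
  have orth: "cinner (?P x) (y - ?P y) = 0" for x y
  proof -
    have "cinner (y - ?P y) (?P x) = 0" using projS[OF S] by blast
    then show ?thesis by (subst cinner_commute) simp
  qed
  have bnd: "norm (?P x) \<le> norm x * 1" for x
  proof -
    have "x = ?P x + (x - ?P x)" by simp
    then have "(norm x)^2 = (norm (?P x))^2 + (norm (x - ?P x))^2 + 2 * Re (cinner (?P x) (x - ?P x))"
      using norm_add_sq[of "?P x" "x - ?P x"] by simp
    then have "(norm (?P x))^2 \<le> (norm x)^2" using orth[of x x] by simp
    then show ?thesis using power2_le_imp_le by simp
  qed
  have bc: "bounded_clinear ?P" unfolding bounded_clinear_def using add sc bnd by blast
  have sa: "cinner (?P x) y = cinner x (?P y)" for x y
  proof -
    have "cinner (?P x) y = cinner (?P x) (?P y + (y - ?P y))" by simp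
    also have "\<dots> = cinner (?P x) (?P y)" unfolding cinner_add_right orth by simp
    also have "\<dots> = cinner (?P x + (x - ?P x)) (?P y)"
      unfolding cinner_add_left using projS(2)[OF S, of x] projS(1)[OF S, of y] by simp
    finally show ?thesis by simp
  qed
  have idem: "?P (?P x) = ?P x" for x
    by (rule projS_eq[OF S]) (auto intro: projS(1)[OF S])
  have rng: "range ?P = S"
  proof
    show "range ?P \<subseteq> S" using projS(1)[OF S] by blast
    show "S \<subseteq> range ?P"
    proof
      fix s assume "s \<in> S"
      then have "?P s = s" by (intro projS_eq[OF S]) auto
      then show "s \<in> range ?P" by (metis rangeI)
    qed
  qed
  show ?thesis unfolding is_orth_proj_def selfadj_ops_def using bc sa idem rng by (auto simp: o_def fun_eq_iff)
qed

lemma op_bc: "is_orth_proj P \<Longrightarrow> bounded_clinear P"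
  unfolding is_orth_proj_def selfadj_ops_def by blast
lemma op_sa: "is_orth_proj P \<Longrightarrow> cinner (P x) y = cinner x (P y)"
  unfolding is_orth_proj_def selfadj_ops_def by blast
lemma op_idem: "is_orth_proj P \<Longrightarrow> P (P x) = P x"
  unfolding is_orth_proj_def by (metis comp_apply)

lemma op_fix: "is_orth_proj P \<Longrightarrow> y \<in> range P \<Longrightarrow> P y = y"
  using op_idem by blast

lemma op_orth:
  assumes P: "is_orth_proj P" shows "cinner (x - P x) (P z) = 0"
proof -
  have "cinner (x - P x) (P z) = cinner (P (x - P x)) z" using op_sa[OF P] by simp
  also have "P (x - P x) = 0" using bounded_clinear_diff[OF op_bc[OF P]] op_idem[OF P] by simp
  finally show ?thesis by simp
qed

lemma op_char:
  assumes P: "is_orth_proj P" and S: "csubspace S" and r: "range P = S"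
    and v: "v \<in> S" "\<forall>s\<in>S. cinner (x - v) s = 0"
  shows "P x = v"
proof (rule orth_unique[OF S _ v(1) _ v(2)])
  show "P x \<in> S" using r by blast
  show "\<forall>s\<in>S. cinner (x - P x) s = 0" using op_orth[OF P] r by blast
qed

lemma op_unique:
  assumes P: "is_orth_proj P" and Q: "is_orth_proj Q" and r: "range P = range Q"
  shows "P = Q"
proof
  fix x
  have S: "csubspace (range Q)" using csubspace_range[OF op_bc[OF Q]] .
  show "P x = Q x"
    by (rule op_char[OF P S r]) (use op_orth[OF Q] in blast)+
qed

lemma closed_closure_range_csub:
  "bounded_clinear C \<Longrightarrow> csubspace (closure (range C))"
  using csubspace_closure csubspace_range by blast

lemma range_proj:
  assumes C: "C \<in> selfadj_ops"
  shows "is_orth_proj (range_proj C)" "range (range_proj C) = closure (range C)"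
proof -
  let ?S = "closure (range C)"
  have bc: "bounded_clinear C" using C unfolding selfadj_ops_def by blast
  have S: "csubspace ?S" "closed ?S" using closed_closure_range_csub[OF bc] by auto
  have ex: "\<exists>!P. is_orth_proj P \<and> range P = ?S"
    using orth_proj_exists[OF S] op_unique by metis
  have "is_orth_proj (range_proj C) \<and> range (range_proj C) = ?S"
    unfolding range_proj_def by (rule theI'[OF ex])
  then show "is_orth_proj (range_proj C)" "range (range_proj C) = closure (range C)" by auto
qed

lemma sa_bc: "X \<in> selfadj_ops \<Longrightarrow> bounded_clinear X"
  unfolding selfadj_ops_def by blast
lemma sa_sa: "X \<in> selfadj_ops \<Longrightarrow> cinner (X x) y = cinner x (X y)"
  unfolding selfadj_ops_def by blast

lemma cinner_ext0: "(\<And>y. cinner x y = 0) \<Longrightarrow> x = (0::'a::complex_inner)"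
  by (rule cinner_ext) simp

lemma le_decomp:
  assumes A: "A \<in> selfadj_ops" and C: "C \<in> selfadj_ops" and le: "logic_le C A"
  shows "A \<circ> range_proj C = C"
proof -
  obtain D where D: "D \<in> selfadj_ops" and AD: "A = (\<lambda>x. C x + D x)" and CD: "C \<circ> D = zero_op"
    using le unfolding logic_le_def by blast
  let ?P = "range_proj C"
  have P: "is_orth_proj ?P" and rP: "range ?P = closure (range C)" using range_proj[OF C] by auto
  have CD0: "C (D y) = 0" for y using fun_cong[OF CD, of y] unfolding zero_op_def by simp
  have DC0: "D (C x) = 0" for x
  proof (rule cinner_ext0)
    fix y show "cinner (D (C x)) y = 0" using sa_sa[OF D] sa_sa[OF C] CD0 by simp
  qed
  have Cker: "C (y - ?P y) = 0" for y
  proof (rule cinner_ext0)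
    fix z
    have "C z \<in> range C" by simp
    then have "C z \<in> closure (range C)" by (rule subsetD[OF closure_subset])
    then have "C z \<in> range ?P" using rP by simp
    then have "?P (C z) = C z" by (rule op_fix[OF P])
    then have "cinner (y - ?P y) (C z) = 0" using op_orth[OF P, of y "C z"] by simp
    then show "cinner (C (y - ?P y)) z = 0" using sa_sa[OF C] by simp
  qed
  have DP: "D (?P y) = 0" for y
  proof -
    have cl: "closed {x. D x = 0}"
      by (rule closed_Collect_eq) (auto intro: bounded_clinear_cont[OF sa_bc[OF D]] continuous_on_const)
    have "range C \<subseteq> {x. D x = 0}" using DC0 by auto
    then have "closure (range C) \<subseteq> {x. D x = 0}" using cl by (rule closure_minimal)
    moreover have "?P y \<in> closure (range C)" unfolding rP[symmetric] by simp
    ultimately show ?thesis by blast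
  qed
  show ?thesis
  proof
    fix y
    have "C (y - ?P y) = C y - C (?P y)" using bounded_clinear_diff[OF sa_bc[OF C]] .
    then have "C (?P y) = C y" using Cker[of y] by simp
    then show "(A \<circ> ?P) y = C y" using AD DP[of y] by simp
  qed
qed

lemma comm_of_eq:
  assumes E: "E \<in> selfadj_ops" and X: "X \<in> selfadj_ops" and P: "is_orth_proj P"
    and eq: "E = X \<circ> P"
  shows "P (X x) = X (P x)"
proof (rule cinner_ext)
  fix y
  have "cinner (P (X x)) y = cinner x (X (P y))" using op_sa[OF P] sa_sa[OF X] by simp
  also have "\<dots> = cinner x (E y)" using eq by simp
  also have "\<dots> = cinner (E x) y" using sa_sa[OF E] by simp
  also have "\<dots> = cinner (X (P x)) y" using eq by simp
  finally show "cinner (P (X x)) y = cinner (X (P x)) y" .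
qed

lemma lower_of_comm:
  assumes X: "X \<in> selfadj_ops" and P: "is_orth_proj P" and cm: "\<And>x. P (X x) = X (P x)"
  shows "X \<circ> P \<in> selfadj_ops" "logic_le (X \<circ> P) X"
proof -
  have bX: "bounded_clinear X" using sa_bc[OF X] .
  have bP: "bounded_clinear P" using op_bc[OF P] .
  have bXP: "bounded_clinear (X \<circ> P)" using bounded_clinear_comp[OF bX bP] .
  show XP: "X \<circ> P \<in> selfadj_ops"
    unfolding selfadj_ops_def using bXP sa_sa[OF X] op_sa[OF P] cm by simp
  define D where "D = (\<lambda>x. X x - X (P x))"
  have bD: "bounded_clinear D" unfolding D_def
    using bounded_clinear_minus[OF bX bXP] by (simp add: o_def)
  have DS: "D \<in> selfadj_ops"
    unfolding selfadj_ops_def D_def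
    using bD[unfolded D_def] sa_sa[OF X] sa_sa[OF XP]
    by (simp add: cinner_diff_left cinner_diff_right)
  have eq: "X = (\<lambda>x. (X \<circ> P) x + D x)" unfolding D_def by simp
  have z: "(X \<circ> P) \<circ> D = zero_op"
  proof
    fix x
    have "P (D x) = P (X x) - P (X (P x))" unfolding D_def using bounded_clinear_diff[OF bP] .
    also have "\<dots> = 0" using cm op_idem[OF P] by simp
    finally show "((X \<circ> P) \<circ> D) x = zero_op x"
      unfolding zero_op_def using bounded_clinear_zero[OF bX] by simp
  qed
  show "logic_le (X \<circ> P) X" unfolding logic_le_def using DS eq z by blast
qed

lemma proj_le_of_range:
  assumes P: "is_orth_proj P" and Q: "is_orth_proj Q" and r: "range P \<subseteq> range Q"
  shows "proj_le P Q"
  unfolding proj_le_def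
proof
  fix x
  show "(P \<circ> Q) x = P x"
  proof (rule cinner_ext)
    fix y
    have "P y \<in> range Q" using r by (rule subsetD) simp
    then have "Q (P y) = P y" by (rule op_fix[OF Q])
    then show "cinner ((P \<circ> Q) x) y = cinner (P x) y" using op_sa[OF P] op_sa[OF Q] by simp
  qed
qed

lemma proj_le_flip:
  assumes P: "is_orth_proj P" and Q: "is_orth_proj Q" and le: "proj_le P Q"
  shows "Q (P x) = P x"
proof (rule cinner_ext)
  fix y
  have "P (Q y) = P y" using le unfolding proj_le_def by (metis comp_apply)
  then show "cinner (Q (P x)) y = cinner (P x) y" using op_sa[OF P] op_sa[OF Q] by simp
qed

inductive_set words :: "('a \<Rightarrow> 'a) \<Rightarrow> ('a \<Rightarrow> 'a) \<Rightarrow> ('a \<Rightarrow> 'a) set" for A B where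
  w_id: "id \<in> words A B"
| w_A: "w \<in> words A B \<Longrightarrow> w \<circ> A \<in> words A B"
| w_B: "w \<in> words A B \<Longrightarrow> w \<circ> B \<in> words A B"

lemma bounded_clinear_id: "bounded_clinear (id :: 'a::complex_normed_vector \<Rightarrow> 'a)"
  unfolding bounded_clinear_def by (auto intro: exI[of _ 1])

lemma words_bc:
  assumes "bounded_clinear A" "bounded_clinear B" "w \<in> words A B"
  shows "bounded_clinear w"
  using assms(3)
proof induct
  case w_id show ?case by (rule bounded_clinear_id)
next
  case (w_A w) show ?case by (rule bounded_clinear_comp[OF w_A(2) assms(1)])
next
  case (w_B w) show ?case by (rule bounded_clinear_comp[OF w_B(2) assms(2)])
qed

lemma comm_of_invariant:
  assumes P: "is_orth_proj P" and X: "X \<in> selfadj_ops" and inv: "\<And>k. k \<in> range P \<Longrightarrow> X k \<in> range P"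
  shows "P (X x) = X (P x)"
proof -
  have S: "csubspace (range P)" using csubspace_range[OF op_bc[OF P]] .
  show ?thesis
  proof (rule op_char[OF P S refl])
    show "X (P x) \<in> range P" using inv by blast
    show "\<forall>s\<in>range P. cinner (X x - X (P x)) s = 0"
    proof
      fix s assume s: "s \<in> range P"
      then have "X s \<in> range P" by (rule inv)
      then have "P (X s) = X s" by (rule op_fix[OF P])
      then have "cinner (x - P x) (X s) = 0" using op_orth[OF P, of x "X s"] by (simp only:)
      moreover have "X x - X (P x) = X (x - P x)" using bounded_clinear_diff[OF sa_bc[OF X]] by simp
      ultimately show "cinner (X x - X (P x)) s = 0" using sa_sa[OF X] by simp
    qed
  qed
qed

theorem corollary4:
  fixes A B :: "'a::chilbert_space \<Rightarrow> 'a"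
  assumes "A \<in> selfadj_ops" and "B \<in> selfadj_ops"
  shows "\<exists>M. M \<in> {range_proj C | C. C \<in> selfadj_ops \<and> logic_le C A \<and> logic_le C B}
           \<and> (\<forall>Q \<in> {range_proj C | C. C \<in> selfadj_ops \<and> logic_le C A \<and> logic_le C B}. proj_le Q M)
           \<and> (\<exists>L. is_logic_meet A B L)
           \<and> is_logic_meet A B (B \<circ> M)"
proof -
  note A = assms(1) and B = assms(2)
  have bA: "bounded_clinear A" and bB: "bounded_clinear B" using sa_bc A B by auto
  define W where "W = words A B"
  define K where "K = {x. \<forall>w\<in>W. A (w x) = B (w x)}"
  have wbc: "w \<in> W \<Longrightarrow> bounded_clinear w" for w unfolding W_def using words_bc[OF bA bB] by blast
  have Ksub: "csubspace K" unfolding csubspace_def K_def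
  proof (intro conjI ballI allI CollectI; (elim CollectE)?)
    show "A (w 0) = B (w 0)" if "w \<in> W" for w
      using bounded_clinear_zero[OF wbc[OF that]] bounded_clinear_zero[OF bA] bounded_clinear_zero[OF bB] by simp
    show "A (w (x + y)) = B (w (x + y))" if "\<forall>w\<in>W. A (w x) = B (w x)" "\<forall>w\<in>W. A (w y) = B (w y)" "w \<in> W" for x y w
      using that bounded_clinear_add[OF wbc[OF that(3)]] bounded_clinear_add[OF bA] bounded_clinear_add[OF bB] by simp
    show "A (w (c *\<^sub>C x)) = B (w (c *\<^sub>C x))" if "\<forall>w\<in>W. A (w x) = B (w x)" "w \<in> W" for x c w
      using that bounded_clinear_scaleC[OF wbc[OF that(2)]] bounded_clinear_scaleC[OF bA] bounded_clinear_scaleC[OF bB] by simp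
  qed
  have Kcl: "closed K" unfolding K_def Ball_def
  proof (rule closed_Collect_all)
    fix w
    show "closed {x. w \<in> W \<longrightarrow> A (w x) = B (w x)}"
    proof (cases "w \<in> W")
      case True
      have "closed {x. (A \<circ> w) x = (B \<circ> w) x}"
        by (rule closed_Collect_eq; rule bounded_clinear_cont; rule bounded_clinear_comp)
           (auto intro: wbc True bA bB)
      then show ?thesis using True by simp
    next
      case False then show ?thesis by simp
    qed
  qed
  have Kmem: "\<forall>w\<in>W. A (w x) = B (w x)" if "x \<in> K" for x using that unfolding K_def by simp
  have KinvA: "A x \<in> K" if "x \<in> K" for x
    unfolding K_def
  proof (intro CollectI ballI)
    fix w assume "w \<in> W"
    then have "w \<circ> A \<in> W" unfolding W_def by (rule words.w_A)
    then have "A ((w \<circ> A) x) = B ((w \<circ> A) x)" using Kmem[OF that] by blast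
    then show "A (w (A x)) = B (w (A x))" by simp
  qed
  have KinvB: "B x \<in> K" if "x \<in> K" for x
    unfolding K_def
  proof (intro CollectI ballI)
    fix w assume "w \<in> W"
    then have "w \<circ> B \<in> W" unfolding W_def by (rule words.w_B)
    then have "A ((w \<circ> B) x) = B ((w \<circ> B) x)" using Kmem[OF that] by blast
    then show "A (w (B x)) = B (w (B x))" by simp
  qed
  define PK where "PK = projS K"
  have PK: "is_orth_proj PK" "range PK = K" using orth_proj_exists[OF Ksub Kcl] unfolding PK_def by auto
  have cA: "PK (A x) = A (PK x)" for x using comm_of_invariant[OF PK(1) A] KinvA PK(2) by blast
  have cB: "PK (B x) = B (PK x)" for x using comm_of_invariant[OF PK(1) B] KinvB PK(2) by blast
  have ABK: "A \<circ> PK = B \<circ> PK"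
  proof
    fix x have "PK x \<in> K" using PK(2) by blast
    moreover have "id \<in> W" unfolding W_def by (rule words.w_id)
    ultimately have "A (id (PK x)) = B (id (PK x))" using Kmem by blast
    then show "(A \<circ> PK) x = (B \<circ> PK) x" by simp
  qed
  define C0 where "C0 = A \<circ> PK"
  have C0S: "C0 \<in> selfadj_ops" and C0A: "logic_le C0 A" unfolding C0_def using lower_of_comm[OF A PK(1) cA] by auto
  have C0B: "logic_le C0 B" unfolding C0_def ABK using lower_of_comm[OF B PK(1) cB] by auto
  define M where "M = range_proj C0"
  have Mp: "is_orth_proj M" "range M = closure (range C0)" unfolding M_def using range_proj[OF C0S] by auto
  have BM: "B \<circ> M = C0" unfolding M_def using le_decomp[OF B C0S C0B] .
  have maxle: "proj_le (range_proj C) M" if C: "C \<in> selfadj_ops" "logic_le C A" "logic_le C B" for C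
  proof -
    let ?P = "range_proj C"
    have P: "is_orth_proj ?P" "range ?P = closure (range C)" using range_proj[OF C(1)] by auto
    have AP: "A \<circ> ?P = C" using le_decomp[OF A C(1,2)] .
    have BP: "B \<circ> ?P = C" using le_decomp[OF B C(1,3)] .
    have pA: "?P (A x) = A (?P x)" for x using comm_of_eq[OF C(1) A P(1) AP[symmetric]] .
    have pB: "?P (B x) = B (?P x)" for x using comm_of_eq[OF C(1) B P(1) BP[symmetric]] .
    have inv: "w \<in> W \<Longrightarrow> \<forall>v\<in>range ?P. w v \<in> range ?P" for w
      unfolding W_def
    proof (induct rule: words.induct)
      case w_id then show ?case by simp
    next
      case (w_A w)
      show ?case
      proof
        fix v assume "v \<in> range ?P"
        then obtain u where "v = ?P u" by blast
        then have "A v = ?P (A (?P u))" using pA op_idem[OF P(1)] by simp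
        then have "A v \<in> range ?P" by simp
        then show "(w \<circ> A) v \<in> range ?P" using w_A(2) unfolding comp_apply by blast
      qed
    next
      case (w_B w)
      show ?case
      proof
        fix v assume "v \<in> range ?P"
        then obtain u where "v = ?P u" by blast
        then have "B v = ?P (B (?P u))" using pB op_idem[OF P(1)] by simp
        then have "B v \<in> range ?P" by simp
        then show "(w \<circ> B) v \<in> range ?P" using w_B(2) unfolding comp_apply by blast
      qed
    qed
    have rK: "range ?P \<subseteq> K"
    proof
      fix v assume v: "v \<in> range ?P"
      show "v \<in> K" unfolding K_def
      proof (intro CollectI ballI)
        fix w assume "w \<in> W"
        then have "w v \<in> range ?P" using inv v by blast
        then obtain u where u: "w v = ?P u" by blast
        have "A (?P u) = B (?P u)" using AP BP by (metis comp_apply)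
        then show "A (w v) = B (w v)" using u by simp
      qed
    qed
    have "range C \<subseteq> range C0"
    proof
      fix y assume "y \<in> range C"
      then obtain x where y: "y = C x" by blast
      have "?P x \<in> K" using rK by blast
      then have "?P x \<in> range PK" using PK(2) by simp
      then have "PK (?P x) = ?P x" by (rule op_fix[OF PK(1)])
      then have "C0 (?P x) = C x" unfolding C0_def using AP by (metis comp_apply)
      then show "y \<in> range C0" using y by (metis rangeI)
    qed
    then have "range ?P \<subseteq> range M" unfolding P(2) Mp(2) by (rule closure_mono)
    then show ?thesis using proj_le_of_range[OF P(1) Mp(1)] by blast
  qed
  have meet: "is_logic_meet A B C0"
    unfolding is_logic_meet_def
  proof (intro conjI ballI impI C0S C0A C0B; elim conjE)
    fix E assume E: "E \<in> selfadj_ops" and EA: "logic_le E A" and EB: "logic_le E B"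
    let ?P = "range_proj E"
    have P: "is_orth_proj ?P" using range_proj[OF E] by auto
    have le: "proj_le ?P M" using maxle[OF E EA EB] .
    have MP: "M (?P x) = ?P x" for x using proj_le_flip[OF P Mp(1) le] .
    have BP: "B \<circ> ?P = E" using le_decomp[OF B E EB] .
    have eq: "E = C0 \<circ> ?P"
    proof
      fix x
      have "(C0 \<circ> ?P) x = B (M (?P x))" using BM by (metis comp_apply)
      also have "\<dots> = E x" using MP BP by (metis comp_apply)
      finally show "E x = (C0 \<circ> ?P) x" by simp
    qed
    have cm: "?P (C0 x) = C0 (?P x)" for x using comm_of_eq[OF E C0S P eq] .
    show "logic_le E C0" using lower_of_comm(2)[OF C0S P cm] eq by simp
  qed
  show ?thesis
  proof (rule exI[of _ M], intro conjI)
    show "M \<in> {range_proj C | C. C \<in> selfadj_ops \<and> logic_le C A \<and> logic_le C B}"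
      unfolding M_def using C0S C0A C0B by blast
    show "\<forall>Q\<in>{range_proj C | C. C \<in> selfadj_ops \<and> logic_le C A \<and> logic_le C B}. proj_le Q M"
      using maxle by blast
    show "\<exists>L. is_logic_meet A B L" using meet by blast
    show "is_logic_meet A B (B \<circ> M)" using meet BM by simp
  qed
qed

end
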